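(* Let $p_1,p_2$ be periods. Then $\deg(p_1p_2)\le \deg(p_1)+\deg(p_2)$ and $\deg(p_1+p_2)\le \max(\deg(p_1),\deg(p_2))$.
   Context: Let $\overline{\mathbb{Q}}$ denote the field of algebraic numbers. For $n\ge 1$, an admissible domain in $\mathbb{R}^n$ is a subset of $\mathbb{R}^n$ which is a finite union of sets of the form $\{x\in\mathbb{R}^n : P_1(x)\,\square_1\, 0,\dots,P_r(x)\,\square_r\, 0\}$, where each $P_i$ is a polynomial with real algebraic coefficients and each $\square_i\in\{\ge,>\}$, and which has finite Lebesgue measure $\mathrm{vol}_n$. A real number $p$ is a real period if $p=\mathrm{vol}_n(\Sigma_1)-\mathrm{vol}_n(\Sigma_2)$ for some $n\ge1$ and admissible domains $\Sigma_1,\Sigma_2\subseteq\mathbb{R}^n$; a complex number is a period if its real and imaginary parts are real periods. The degree is defined as follows: $\deg(0)=0$; for a nonzero real period $p$, $\deg(p)$ is the least $n\ge 1$ such that $p=\mathrm{vol}_n(\Sigma_1)-\mathrm{vol}_n(\Sigma_2)$ with $\Sigma_1,\Sigma_2$ admissible domains in $\mathbb{R}^n$; for a complex period $p=a+ib$ ($a,b$ real), $\deg(p)=\max(\deg(a),\deg(b))$; for a complex number that is not a period, $\deg(p)=\infty$, with $\infty$ larger than every integer. *)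

theory Defs
  imports "HOL-Analysis.Analysis" "HOL-Computational_Algebra.Polynomial" "HOL-Library.Extended_Nat"
begin

text \<open>Points of R^n are represented as functions nat => real that are extensional
  on {..<n} (undefined outside); Lebesgue measure on R^n is the n-fold product of lborel.\<close>

definition Rn :: "nat \<Rightarrow> (nat \<Rightarrow> real) measure" where
  "Rn n = Pi\<^sub>M {..<n} (\<lambda>_. lborel)"

definition alg_poly_fun :: "nat \<Rightarrow> ((nat \<Rightarrow> real) \<Rightarrow> real) \<Rightarrow> bool" where
  "alg_poly_fun n P \<longleftrightarrow>
     (\<exists>S :: (nat \<Rightarrow> nat) set. \<exists>c :: (nat \<Rightarrow> nat) \<Rightarrow> real.
        finite S \<and> (\<forall>\<alpha>\<in>S. algebraic (c \<alpha>)) \<and>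
        (\<forall>x. P x = (\<Sum>\<alpha>\<in>S. c \<alpha> * (\<Prod>i<n. x i ^ \<alpha> i))))"

definition basic_set :: "nat \<Rightarrow> (((nat \<Rightarrow> real) \<Rightarrow> real) \<times> bool) list \<Rightarrow> (nat \<Rightarrow> real) set" where
  "basic_set n cs = {x \<in> PiE {..<n} (\<lambda>_. UNIV).
      \<forall>(P, s) \<in> set cs. (if s then P x > 0 else P x \<ge> 0)}"

definition admissible :: "nat \<Rightarrow> (nat \<Rightarrow> real) set \<Rightarrow> bool" where
  "admissible n \<Sigma> \<longleftrightarrow>
     (\<exists>L :: (((nat \<Rightarrow> real) \<Rightarrow> real) \<times> bool) list list.
        (\<forall>cs \<in> set L. \<forall>(P, s) \<in> set cs. alg_poly_fun n P) \<and>
        \<Sigma> = (\<Union>cs \<in> set L. basic_set n cs)) \<and>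
     emeasure (Rn n) \<Sigma> < \<infinity>"

definition period_in_dim :: "nat \<Rightarrow> real \<Rightarrow> bool" where
  "period_in_dim n p \<longleftrightarrow>
     (\<exists>\<Sigma>1 \<Sigma>2. admissible n \<Sigma>1 \<and> admissible n \<Sigma>2 \<and>
        p = measure (Rn n) \<Sigma>1 - measure (Rn n) \<Sigma>2)"

definition real_period :: "real \<Rightarrow> bool" where
  "real_period p \<longleftrightarrow> (\<exists>n\<ge>1. period_in_dim n p)"

definition period :: "complex \<Rightarrow> bool" where
  "period z \<longleftrightarrow> real_period (Re z) \<and> real_period (Im z)"

definition real_period_deg :: "real \<Rightarrow> enat" where
  "real_period_deg p =
     (if p = 0 then 0
      else if real_period p then enat (LEAST n. n \<ge> 1 \<and> period_in_dim n p)
      else \<infinity>)"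

definition period_deg :: "complex \<Rightarrow> enat" where
  "period_deg z =
     (if period z then max (real_period_deg (Re z)) (real_period_deg (Im z)) else \<infinity>)"

end

theory Submission
  imports Defs
begin


definition mon :: "nat \<Rightarrow> (nat \<Rightarrow> nat) \<Rightarrow> (nat \<Rightarrow> real) \<Rightarrow> real" where
  "mon n b x = (\<Prod>i<n. x i ^ b i)"

definition intp :: "nat \<Rightarrow> ((nat \<Rightarrow> real) \<Rightarrow> real) \<Rightarrow> bool" where
  "intp n f \<longleftrightarrow> (\<exists>J::nat set. \<exists>s::nat \<Rightarrow> real. \<exists>b. finite J \<and> (\<forall>j\<in>J. s j = 1 \<or> s j = -1)
     \<and> (\<forall>x. f x = (\<Sum>j\<in>J. s j * mon n (b j) x)))"

definition grep :: "nat \<Rightarrow> ((nat \<Rightarrow> real) \<Rightarrow> real) \<Rightarrow> bool" where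
  "grep n f \<longleftrightarrow> (\<exists>J::nat set. \<exists>c::nat \<Rightarrow> real. \<exists>b. finite J \<and> (\<forall>j\<in>J. algebraic (c j))
     \<and> (\<forall>x. f x = (\<Sum>j\<in>J. c j * mon n (b j) x)))"

lemma sum_split_enc:
  fixes f g :: "nat \<Rightarrow> real"
  assumes "finite J1" "finite J2"
  shows "(\<Sum>j\<in>J1. f j) + (\<Sum>j\<in>J2. g j) =
    (\<Sum>k\<in>(\<lambda>j. 2*j) ` J1 \<union> (\<lambda>j. 2*j+1) ` J2. if even k then f (k div 2) else g (k div 2))"
proof -
  have d: "(\<lambda>j. 2*j) ` J1 \<inter> (\<lambda>j. 2*j+1) ` J2 = {}"
  proof (rule ccontr)
    assume "\<not> ?thesis" then obtain a b where "(2::nat)*a = 2*b+1" by auto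
    then show False by presburger
  qed
  have i1: "inj_on (\<lambda>j::nat. 2*j) J1" by (auto simp: inj_on_def)
  have i2: "inj_on (\<lambda>j::nat. 2*j+1) J2" by (auto simp: inj_on_def)
  have e1: "(\<Sum>k\<in>(\<lambda>j. 2*j) ` J1. if even k then f (k div 2) else g (k div 2)) = (\<Sum>j\<in>J1. f j)"
    by (simp add: sum.reindex[OF i1])
  have e2: "(\<Sum>k\<in>(\<lambda>j. 2*j+1) ` J2. if even k then f (k div 2) else g (k div 2)) = (\<Sum>j\<in>J2. g j)"
    by (subst sum.reindex[OF i2]) auto
  show ?thesis
    using assms d by (subst sum.union_disjoint) (simp_all only: e1 e2 finite_imageI)
qed

lemma intp_add: assumes "intp n f" "intp n g" shows "intp n (\<lambda>x. f x + g x)"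
proof -
  from assms(1) obtain J1 :: "nat set" and s1 b1 where 1: "finite J1" "\<forall>j\<in>J1. s1 j = 1 \<or> s1 j = -1"
     "\<forall>x. f x = (\<Sum>j\<in>J1. s1 j * mon n (b1 j) x)" unfolding intp_def by blast
  from assms(2) obtain J2 :: "nat set" and s2 b2 where 2: "finite J2" "\<forall>j\<in>J2. s2 j = 1 \<or> s2 j = -1"
     "\<forall>x. g x = (\<Sum>j\<in>J2. s2 j * mon n (b2 j) x)" unfolding intp_def by blast
  let ?J = "(\<lambda>j. 2*j) ` J1 \<union> (\<lambda>j. 2*j+1) ` J2"
  let ?s = "\<lambda>k. if even k then s1 (k div 2) else s2 (k div 2)"
  let ?b = "\<lambda>k. if even k then b1 (k div 2) else b2 (k div 2)"
  show ?thesis unfolding intp_def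
  proof (intro exI conjI allI)
    show "finite ?J" using 1 2 by auto
    show "\<forall>j\<in>?J. ?s j = 1 \<or> ?s j = -1" using 1 2 by auto
    fix x
    have "f x + g x = (\<Sum>k\<in>?J. if even k then s1 (k div 2) * mon n (b1 (k div 2)) x else s2 (k div 2) * mon n (b2 (k div 2)) x)"
      using 1 2 by (simp add: sum_split_enc)
    also have "\<dots> = (\<Sum>k\<in>?J. ?s k * mon n (?b k) x)" by (rule sum.cong) auto
    finally show "f x + g x = (\<Sum>k\<in>?J. ?s k * mon n (?b k) x)" .
  qed
qed

lemma grep_add: assumes "grep n f" "grep n g" shows "grep n (\<lambda>x. f x + g x)"
proof -
  from assms(1) obtain J1 :: "nat set" and s1 b1 where 1: "finite J1" "\<forall>j\<in>J1. algebraic (s1 j)"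
     "\<forall>x. f x = (\<Sum>j\<in>J1. s1 j * mon n (b1 j) x)" unfolding grep_def by blast
  from assms(2) obtain J2 :: "nat set" and s2 b2 where 2: "finite J2" "\<forall>j\<in>J2. algebraic (s2 j)"
     "\<forall>x. g x = (\<Sum>j\<in>J2. s2 j * mon n (b2 j) x)" unfolding grep_def by blast
  let ?J = "(\<lambda>j. 2*j) ` J1 \<union> (\<lambda>j. 2*j+1) ` J2"
  let ?s = "\<lambda>k. if even k then s1 (k div 2) else s2 (k div 2)"
  let ?b = "\<lambda>k. if even k then b1 (k div 2) else b2 (k div 2)"
  show ?thesis unfolding grep_def
  proof (intro exI conjI allI)
    show "finite ?J" using 1 2 by auto
    show "\<forall>j\<in>?J. algebraic (?s j)" using 1 2 by auto
    fix x
    have "f x + g x = (\<Sum>k\<in>?J. if even k then s1 (k div 2) * mon n (b1 (k div 2)) x else s2 (k div 2) * mon n (b2 (k div 2)) x)"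
      using 1 2 by (simp add: sum_split_enc)
    also have "\<dots> = (\<Sum>k\<in>?J. ?s k * mon n (?b k) x)" by (rule sum.cong) auto
    finally show "f x + g x = (\<Sum>k\<in>?J. ?s k * mon n (?b k) x)" .
  qed
qed

lemma mon_mult: "mon n b x * mon n b' x = mon n (\<lambda>i. b i + b' i) x"
  by (simp add: mon_def power_add prod.distrib)

lemma intp_mult: assumes "intp n f" "intp n g" shows "intp n (\<lambda>x. f x * g x)"
proof -
  from assms(1) obtain J1 :: "nat set" and s1 b1 where 1: "finite J1" "\<forall>j\<in>J1. s1 j = 1 \<or> s1 j = -1"
     "\<forall>x. f x = (\<Sum>j\<in>J1. s1 j * mon n (b1 j) x)" unfolding intp_def by blast
  from assms(2) obtain J2 :: "nat set" and s2 b2 where 2: "finite J2" "\<forall>j\<in>J2. s2 j = 1 \<or> s2 j = -1"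
     "\<forall>x. g x = (\<Sum>j\<in>J2. s2 j * mon n (b2 j) x)" unfolding intp_def by blast
  let ?J = "prod_encode ` (J1 \<times> J2)"
  let ?s = "\<lambda>k. s1 (fst (prod_decode k)) * s2 (snd (prod_decode k))"
  let ?b = "\<lambda>k i. b1 (fst (prod_decode k)) i + b2 (snd (prod_decode k)) i"
  have inj: "inj_on prod_encode (J1 \<times> J2)" using inj_prod_encode inj_on_subset by blast
  show ?thesis unfolding intp_def
  proof (intro exI conjI allI)
    show "finite ?J" using 1 2 by auto
    show "\<forall>j\<in>?J. ?s j = 1 \<or> ?s j = -1"
    proof
      fix k assume "k \<in> ?J"
      then obtain j l where "j \<in> J1" "l \<in> J2" "k = prod_encode (j,l)" by auto
      then show "?s k = 1 \<or> ?s k = -1" using 1 2 by (cases "s1 j = 1"; cases "s2 l = 1") force+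
    qed
    fix x
    have "f x * g x = (\<Sum>j\<in>J1. \<Sum>k\<in>J2. (s1 j * mon n (b1 j) x) * (s2 k * mon n (b2 k) x))"
      using 1 2 by (simp add: sum_product)
    also have "\<dots> = (\<Sum>p\<in>J1 \<times> J2. (s1 (fst p) * s2 (snd p)) * mon n (\<lambda>i. b1 (fst p) i + b2 (snd p) i) x)"
      by (simp add: sum.cartesian_product mon_mult[symmetric] algebra_simps split_beta)
    also have "\<dots> = (\<Sum>k\<in>?J. ?s k * mon n (?b k) x)"
      by (simp add: sum.reindex[OF inj])
    finally show "f x * g x = (\<Sum>k\<in>?J. ?s k * mon n (?b k) x)" .
  qed
qed

lemma intp_one: "intp n (\<lambda>x. 1)"
  unfolding intp_def
  by (rule exI[of _ "{0}"], rule exI[of _ "\<lambda>_. 1"], rule exI[of _ "\<lambda>_ _. 0"]) (simp add: mon_def)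

lemma intp_neg: assumes "intp n f" shows "intp n (\<lambda>x. - f x)"
proof -
  from assms obtain J1 :: "nat set" and s1 b1 where 1: "finite J1" "\<forall>j\<in>J1. s1 j = 1 \<or> s1 j = -1"
     "\<forall>x. f x = (\<Sum>j\<in>J1. s1 j * mon n (b1 j) x)" unfolding intp_def by blast
  show ?thesis unfolding intp_def
    apply (rule exI[of _ J1], rule exI[of _ "\<lambda>j. - s1 j"], rule exI[of _ b1])
    using 1 by (auto simp: sum_negf)
qed

lemma intp_var: assumes "i < n" shows "intp n (\<lambda>x. x i)"
  unfolding intp_def
proof (rule exI[of _ "{0}"], rule exI[of _ "\<lambda>_. 1"], rule exI[of _ "\<lambda>_ l. if l = i then 1 else 0"], intro conjI allI)
  fix x :: "nat \<Rightarrow> real"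
  have "mon n (\<lambda>l. if l = i then 1 else 0) x = (\<Prod>l<n. if l = i then x i else 1)"
    unfolding mon_def by (rule prod.cong) auto
  also have "\<dots> = x i" using assms by (simp add: prod.delta)
  finally show "x i = (\<Sum>j\<in>{0}. 1 * mon n (\<lambda>l. if l = i then 1 else 0) x)" by simp
qed auto

lemma intp_zero: "intp n (\<lambda>x. 0)"
  unfolding intp_def by (rule exI[of _ "{}"]) auto

lemma intp_of_nat: "intp n (\<lambda>x. of_nat k)"
proof (induction k)
  case 0 then show ?case using intp_zero by simp
next
  case (Suc k) then show ?case using intp_add[OF Suc intp_one] by (simp add: add.commute)
qed

lemma intp_sub: "intp n f \<Longrightarrow> intp n g \<Longrightarrow> intp n (\<lambda>x. f x - g x)"
  using intp_add[OF _ intp_neg, of n f g] by simp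

lemma intp_pow: "intp n f \<Longrightarrow> intp n (\<lambda>x. f x ^ k)"
  by (induction k) (auto intro: intp_one intp_mult)

lemma intp_prod: "finite I \<Longrightarrow> (\<And>i. i \<in> I \<Longrightarrow> intp n (f i)) \<Longrightarrow> intp n (\<lambda>x. \<Prod>i\<in>I. f i x)"
  by (induction I rule: finite_induct) (auto intro: intp_one intp_mult)

lemma grep_scale: assumes "algebraic c" "intp n f" shows "grep n (\<lambda>x. c * f x)"
proof -
  from assms(2) obtain J1 :: "nat set" and s1 b1 where 1: "finite J1" "\<forall>j\<in>J1. s1 j = 1 \<or> s1 j = -1"
     "\<forall>x. f x = (\<Sum>j\<in>J1. s1 j * mon n (b1 j) x)" unfolding intp_def by blast
  show ?thesis unfolding grep_def
    apply (rule exI[of _ J1], rule exI[of _ "\<lambda>j. c * s1 j"], rule exI[of _ b1])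
    using 1 assms(1) by (auto simp: sum_distrib_left mult.assoc)
qed

lemma grep_zero: "grep n (\<lambda>x. 0)"
  unfolding grep_def by (rule exI[of _ "{}"]) auto

lemma grep_sum: "finite S \<Longrightarrow> (\<And>a. a \<in> S \<Longrightarrow> grep n (f a)) \<Longrightarrow> grep n (\<lambda>x. \<Sum>a\<in>S. f a x)"
  by (induction S rule: finite_induct) (auto intro: grep_zero grep_add)

lemma grep_alg: assumes "grep n f" shows "alg_poly_fun n f"
proof -
  from assms obtain J :: "nat set" and c b where 1: "finite J" "\<forall>j\<in>J. algebraic (c j)"
     "\<forall>x. f x = (\<Sum>j\<in>J. c j * mon n (b j) x)" unfolding grep_def by blast
  define e where "e j = (\<lambda>i. if i < n then b j i else if i = n then j else 0)" for j
  have inj: "inj_on e J"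
  proof (rule inj_onI)
    fix j k assume "e j = e k"
    then have "e j n = e k n" by simp
    then show "j = k" by (simp add: e_def)
  qed
  define c' where "c' a = c (a n)" for a :: "nat \<Rightarrow> nat"
  show ?thesis unfolding alg_poly_fun_def
  proof (intro exI conjI allI ballI)
    show "finite (e ` J)" using 1 by simp
    show "algebraic (c' a)" if "a \<in> e ` J" for a using that 1 by (auto simp: c'_def e_def)
    fix x
    have "f x = (\<Sum>j\<in>J. c j * mon n (b j) x)" using 1 by simp
    also have "\<dots> = (\<Sum>j\<in>J. c' (e j) * (\<Prod>i<n. x i ^ e j i))"
      by (rule sum.cong) (auto simp: c'_def e_def mon_def)
    also have "\<dots> = (\<Sum>a\<in>e ` J. c' a * (\<Prod>i<n. x i ^ a i))"
      by (simp add: sum.reindex[OF inj])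
    finally show "f x = (\<Sum>a\<in>e ` J. c' a * (\<Prod>i<n. x i ^ a i))" .
  qed
qed

lemma alg_comp:
  assumes "alg_poly_fun n P" "\<And>i. i < n \<Longrightarrow> intp m (\<lambda>x. T x i)"
  shows "alg_poly_fun m (\<lambda>x. P (T x))"
proof -
  from assms(1) obtain S c where 1: "finite S" "\<forall>a\<in>S. algebraic (c a)"
    "\<forall>x. P x = (\<Sum>a\<in>S. c a * (\<Prod>i<n. x i ^ a i))" unfolding alg_poly_fun_def by blast
  have "grep m (\<lambda>x. \<Sum>a\<in>S. c a * (\<Prod>i<n. T x i ^ a i))"
    using 1 by (intro grep_sum grep_scale intp_prod intp_pow assms(2)) auto
  then show ?thesis using 1 by (intro grep_alg) simp
qed



lemma space_Rn: "space (Rn n) = PiE {..<n} (\<lambda>_. UNIV)"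
  by (simp add: Rn_def space_PiM)

definition semi :: "nat \<Rightarrow> (nat \<Rightarrow> real) set \<Rightarrow> bool" where
  "semi n \<Sigma> \<longleftrightarrow> (\<exists>L :: (((nat \<Rightarrow> real) \<Rightarrow> real) \<times> bool) list list.
        (\<forall>cs \<in> set L. \<forall>(P, s) \<in> set cs. alg_poly_fun n P) \<and>
        \<Sigma> = (\<Union>cs \<in> set L. basic_set n cs))"

lemma admissible_iff: "admissible n \<Sigma> \<longleftrightarrow> semi n \<Sigma> \<and> emeasure (Rn n) \<Sigma> < \<infinity>"
  unfolding admissible_def semi_def by blast

lemma alg_measurable: assumes "alg_poly_fun n P" shows "P \<in> borel_measurable (Rn n)"
proof -
  from assms obtain S c where 1: "\<forall>x. P x = (\<Sum>a\<in>S. c a * (\<Prod>i<n. x i ^ a i))"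
    unfolding alg_poly_fun_def by blast
  then have "P = (\<lambda>x. \<Sum>a\<in>S. c a * (\<Prod>i<n. x i ^ a i))" by auto
  moreover have "(\<lambda>x. \<Sum>a\<in>S. c a * (\<Prod>i<n. x i ^ a i)) \<in> borel_measurable (Rn n)"
    unfolding Rn_def by measurable
  ultimately show ?thesis by simp
qed

lemma basic_set_alt: "basic_set n cs = {x \<in> space (Rn n). \<forall>(P, s) \<in> set cs. (if s then P x > 0 else P x \<ge> 0)}"
  unfolding basic_set_def space_Rn by simp

lemma basic_set_append: "basic_set n (cs @ ds) = basic_set n cs \<inter> basic_set n ds"
  unfolding basic_set_def by auto

lemma basic_set_sets:
  assumes "\<forall>(P, s) \<in> set cs. alg_poly_fun n P"
  shows "basic_set n cs \<in> sets (Rn n)"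
  using assms
proof (induction cs)
  case Nil
  then show ?case by (simp add: basic_set_alt)
next
  case (Cons c cs)
  obtain P s where c: "c = (P, s)" by force
  have P: "P \<in> borel_measurable (Rn n)" using Cons.prems c alg_measurable by auto
  have "basic_set n (c # cs) = basic_set n cs \<inter> {x \<in> space (Rn n). if s then P x > 0 else P x \<ge> 0}"
    using c by (auto simp: basic_set_alt)
  moreover have "{x \<in> space (Rn n). if s then P x > 0 else P x \<ge> 0} \<in> sets (Rn n)"
    using P by (cases s) auto
  ultimately show ?case using Cons by auto
qed

lemma semi_sets: "semi n A \<Longrightarrow> A \<in> sets (Rn n)"
  unfolding semi_def using basic_set_sets by blast

lemma semi_space: "semi n A \<Longrightarrow> A \<subseteq> space (Rn n)"
  using semi_sets sets.sets_into_space by blast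

lemma semi_union: "semi n A \<Longrightarrow> semi n B \<Longrightarrow> semi n (A \<union> B)"
  unfolding semi_def
proof (elim exE conjE)
  fix L1 L2 assume 1: "\<forall>cs\<in>set L1. \<forall>(P, s)\<in>set cs. alg_poly_fun n P" "A = \<Union> (basic_set n ` set L1)"
    and 2: "\<forall>cs\<in>set L2. \<forall>(P, s)\<in>set cs. alg_poly_fun n P" "B = \<Union> (basic_set n ` set L2)"
  show "\<exists>L. (\<forall>cs\<in>set L. \<forall>(P, s)\<in>set cs. alg_poly_fun n P) \<and> A \<union> B = \<Union> (basic_set n ` set L)"
    by (rule exI[of _ "L1 @ L2"]) (use 1 2 in auto)
qed

lemma semi_empty: "semi n {}"
  unfolding semi_def by (rule exI[of _ "[]"]) auto

lemma semi_inter_basic: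
  assumes "semi n A" "\<forall>(P, s) \<in> set ds. alg_poly_fun n P"
  shows "semi n (A \<inter> basic_set n ds)"
proof -
  from assms(1) obtain L where 1: "\<forall>cs\<in>set L. \<forall>(P, s)\<in>set cs. alg_poly_fun n P" "A = \<Union> (basic_set n ` set L)"
    unfolding semi_def by blast
  show ?thesis unfolding semi_def
    apply (rule exI[of _ "map (\<lambda>cs. cs @ ds) L"])
    using 1 assms(2) by (auto simp: basic_set_append)
qed

lemma semi_preimage:
  assumes "semi n A" and T: "\<And>x. x \<in> space (Rn m) \<Longrightarrow> T x \<in> space (Rn n)"
    and Ti: "\<And>i. i < n \<Longrightarrow> intp m (\<lambda>x. T x i)"
  shows "semi m {x \<in> space (Rn m). T x \<in> A}"
proof -
  from assms(1) obtain L where 1: "\<forall>cs\<in>set L. \<forall>(P, s)\<in>set cs. alg_poly_fun n P" "A = \<Union> (basic_set n ` set L)"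
    unfolding semi_def by blast
  define f where "f = (\<lambda>(P :: (nat \<Rightarrow> real) \<Rightarrow> real, s :: bool). (\<lambda>x. P (T x), s))"
  have bs: "{x \<in> space (Rn m). T x \<in> basic_set n cs} = basic_set m (map f cs)" for cs
    using T by (auto simp: basic_set_alt f_def)
  show ?thesis unfolding semi_def
  proof (intro exI conjI)
    show "\<forall>cs\<in>set (map (map f) L). \<forall>(P, s)\<in>set cs. alg_poly_fun m P"
      using 1 by (force simp: f_def intro: alg_comp Ti)
    show "{x \<in> space (Rn m). T x \<in> A} = \<Union> (basic_set m ` set (map (map f) L))"
    proof -
      have "{x \<in> space (Rn m). T x \<in> A} = (\<Union>cs\<in>set L. {x \<in> space (Rn m). T x \<in> basic_set n cs})"
        using 1 by auto
      also have "\<dots> = \<Union> (basic_set m ` set (map (map f) L))" using bs by simp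
      finally show ?thesis .
    qed
  qed
qed

lemma shear_preserve:
  assumes j: "j < n" and g: "\<And>x a. g (x(j := a)) = g x"
    and S: "S \<in> sets (Rn n)"
    and E: "{x \<in> space (Rn n). x(j := x j + g x) \<in> S} \<in> sets (Rn n)"
  shows "emeasure (Rn n) {x \<in> space (Rn n). x(j := x j + g x) \<in> S} = emeasure (Rn n) S"
proof -
  interpret product_sigma_finite "\<lambda>_. lborel :: real measure" by standard
  define I where "I = {..<n} - {j}"
  have nI: "{..<n} = insert j I" "j \<notin> I" "finite I" using j by (auto simp: I_def)
  let ?E = "{x \<in> space (Rn n). x(j := x j + g x) \<in> S}"
  have R: "Rn n = Pi\<^sub>M (insert j I) (\<lambda>_. lborel)" by (simp add: Rn_def nI(1))
  have sp: "x(j := y) \<in> space (Rn n)" if "x \<in> space (Pi\<^sub>M I (\<lambda>_. lborel))" for x y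
    using that by (auto simp: space_Rn space_PiM nI PiE_def extensional_def)
  have "emeasure (Rn n) ?E = (\<integral>\<^sup>+ x. indicator ?E x \<partial>Rn n)" using E by simp
  also have "\<dots> = (\<integral>\<^sup>+ x. (\<integral>\<^sup>+ y. indicator ?E (x(j := y)) \<partial>lborel) \<partial>Pi\<^sub>M I (\<lambda>_. lborel))"
    unfolding R using E R nI by (subst product_nn_integral_insert) auto
  also have "\<dots> = (\<integral>\<^sup>+ x. (\<integral>\<^sup>+ y. indicator S (x(j := y)) \<partial>lborel) \<partial>Pi\<^sub>M I (\<lambda>_. lborel))"
  proof (rule nn_integral_cong)
    fix x :: "nat \<Rightarrow> real" assume x: "x \<in> space (Pi\<^sub>M I (\<lambda>_. lborel))"
    have m: "(\<lambda>y. indicator S (x(j := y)) :: ennreal) \<in> borel_measurable borel"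
    proof -
      have "(\<lambda>y. x(j := y)) \<in> measurable lborel (Pi\<^sub>M (insert j I) (\<lambda>_. lborel))"
        using measurable_component_update[OF x nI(2)] .
      moreover have "indicator S \<in> borel_measurable (Pi\<^sub>M (insert j I) (\<lambda>_. lborel))"
        using S R by simp
      ultimately have "indicator S \<circ> (\<lambda>y. x(j := y)) \<in> borel_measurable lborel"
        using measurable_comp by blast
      then show ?thesis by (simp add: comp_def)
    qed
    have "(\<integral>\<^sup>+ y. indicator ?E (x(j := y)) \<partial>lborel) = (\<integral>\<^sup>+ y. indicator S (x(j := g x + 1 * y)) \<partial>lborel)"
      using sp[OF x] g by (intro nn_integral_cong) (simp add: indicator_def add.commute)
    also have "\<dots> = (\<integral>\<^sup>+ y. indicator S (x(j := y)) \<partial>lborel)"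
      using nn_integral_real_affine[OF m, of 1 "g x"] by simp
    finally show "(\<integral>\<^sup>+ y. indicator ?E (x(j := y)) \<partial>lborel) = (\<integral>\<^sup>+ y. indicator S (x(j := y)) \<partial>lborel)" .
  qed
  also have "\<dots> = (\<integral>\<^sup>+ x. indicator S x \<partial>Rn n)"
    unfolding R using S R nI by (subst product_nn_integral_insert) auto
  also have "\<dots> = emeasure (Rn n) S" using S by simp
  finally show ?thesis .
qed



lemma semi_inter: assumes "semi n A" "semi n B" shows "semi n (A \<inter> B)"
proof -
  from assms(1) obtain L1 where 1: "\<forall>cs\<in>set L1. \<forall>(P, s)\<in>set cs. alg_poly_fun n P" "A = \<Union> (basic_set n ` set L1)"
    unfolding semi_def by blast
  from assms(2) obtain L2 where 2: "\<forall>cs\<in>set L2. \<forall>(P, s)\<in>set cs. alg_poly_fun n P" "B = \<Union> (basic_set n ` set L2)"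
    unfolding semi_def by blast
  show ?thesis unfolding semi_def
  proof (intro exI conjI)
    let ?L = "concat (map (\<lambda>cs. map (\<lambda>ds. cs @ ds) L2) L1)"
    show "\<forall>cs\<in>set ?L. \<forall>(P, s)\<in>set cs. alg_poly_fun n P" using 1 2 by auto
    show "A \<inter> B = \<Union> (basic_set n ` set ?L)" using 1 2 by (auto simp: basic_set_append)
  qed
qed

definition shiftv :: "nat \<Rightarrow> nat \<Rightarrow> (nat \<Rightarrow> real) \<Rightarrow> (nat \<Rightarrow> real)" where
  "shiftv n m y = (\<lambda>i\<in>{..<m}. y (n + i))"

lemma shiftv_meas: "shiftv n m \<in> measurable (Pi\<^sub>M {n..<n+m} (\<lambda>_. lborel)) (Rn m)"
  unfolding shiftv_def Rn_def
  by (intro measurable_restrict measurable_component_singleton) auto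

lemma distr_shiftv: "distr (Pi\<^sub>M {n..<n+m} (\<lambda>_. lborel)) (Rn m) (shiftv n m) = Rn m"
  unfolding Rn_def
proof (rule product_sigma_finite.PiM_eqI)
  show "product_sigma_finite (\<lambda>_. lborel :: real measure)" by standard
  show "finite {..<m}" by simp
  show "sets (distr (Pi\<^sub>M {n..<n+m} (\<lambda>_. lborel)) (Pi\<^sub>M {..<m} (\<lambda>_. lborel)) (shiftv n m)) = sets (Pi\<^sub>M {..<m} (\<lambda>_. lborel))"
    by simp
  fix A :: "nat \<Rightarrow> real set" assume A: "\<And>i. i \<in> {..<m} \<Longrightarrow> A i \<in> sets lborel"
  interpret F: finite_product_sigma_finite "\<lambda>_. lborel :: real measure" "{n..<n+m}" by standard simp
  have inj: "inj_on (\<lambda>i. n + i) {..<m}" by (auto simp: inj_on_def)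
  have im: "(\<lambda>i. n + i) ` {..<m} = {n..<n+m}"
  proof (intro set_eqI iffI)
    fix k assume "k \<in> {n..<n+m}"
    then have "k = n + (k - n)" "k - n \<in> {..<m}" by auto
    then show "k \<in> (\<lambda>i. n + i) ` {..<m}" by blast
  qed auto
  have eq: "shiftv n m -` Pi\<^sub>E {..<m} A \<inter> space (Pi\<^sub>M {n..<n+m} (\<lambda>_. lborel)) = Pi\<^sub>E {n..<n+m} (\<lambda>k. A (k - n))"
  proof (intro set_eqI iffI)
    fix x assume x: "x \<in> shiftv n m -` Pi\<^sub>E {..<m} A \<inter> space (Pi\<^sub>M {n..<n+m} (\<lambda>_. lborel))"
    show "x \<in> Pi\<^sub>E {n..<n+m} (\<lambda>k. A (k - n))"
    proof (rule PiE_I)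
      fix k assume k: "k \<in> {n..<n+m}"
      then have "k - n < m" "n + (k - n) = k" by auto
      then show "x k \<in> A (k - n)" using x by (force simp: shiftv_def PiE_iff)
    next
      fix k assume "k \<notin> {n..<n+m}" then show "x k = undefined"
        using x by (auto simp: space_PiM PiE_def extensional_def)
    qed
  next
    fix x assume x: "x \<in> Pi\<^sub>E {n..<n+m} (\<lambda>k. A (k - n))"
    have "x (n + i) \<in> A i" if "i < m" for i
    proof -
      have "n + i \<in> {n..<n+m}" using that by simp
      then have "x (n + i) \<in> A (n + i - n)" using x by (rule PiE_mem[rotated])
      then show ?thesis by simp
    qed
    then show "x \<in> shiftv n m -` Pi\<^sub>E {..<m} A \<inter> space (Pi\<^sub>M {n..<n+m} (\<lambda>_. lborel))"
      using x by (auto simp: shiftv_def space_PiM PiE_iff)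
  qed
  have "emeasure (distr (Pi\<^sub>M {n..<n+m} (\<lambda>_. lborel)) (Pi\<^sub>M {..<m} (\<lambda>_. lborel)) (shiftv n m)) (Pi\<^sub>E {..<m} A)
      = emeasure (Pi\<^sub>M {n..<n+m} (\<lambda>_. lborel)) (Pi\<^sub>E {n..<n+m} (\<lambda>k. A (k - n)))"
    using shiftv_meas[of n m] A
    by (subst emeasure_distr) (auto simp: Rn_def eq intro!: sets_PiM_I_finite)
  also have "\<dots> = (\<Prod>k\<in>{n..<n+m}. emeasure lborel (A (k - n)))"
    using A by (subst F.emeasure_PiM) auto
  also have "\<dots> = (\<Prod>i\<in>{..<m}. emeasure lborel (A i))"
    by (subst im[symmetric], subst prod.reindex[OF inj]) simp
  finally show "emeasure (distr (Pi\<^sub>M {n..<n+m} (\<lambda>_. lborel)) (Pi\<^sub>M {..<m} (\<lambda>_. lborel)) (shiftv n m)) (Pi\<^sub>E {..<m} A)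
      = (\<Prod>i\<in>{..<m}. emeasure lborel (A i))" .
qed

definition prodset :: "nat \<Rightarrow> nat \<Rightarrow> (nat \<Rightarrow> real) set \<Rightarrow> (nat \<Rightarrow> real) set \<Rightarrow> (nat \<Rightarrow> real) set" where
  "prodset n m A B = {x \<in> space (Rn (n+m)). restrict x {..<n} \<in> A \<and> shiftv n m x \<in> B}"

lemma semi_prodset: assumes "semi n A" "semi m B" shows "semi (n+m) (prodset n m A B)"
proof -
  have 1: "semi (n+m) {x \<in> space (Rn (n+m)). restrict x {..<n} \<in> A}"
    by (rule semi_preimage[OF assms(1)]) (auto simp: space_Rn intro: intp_var)
  have 2: "semi (n+m) {x \<in> space (Rn (n+m)). shiftv n m x \<in> B}"
    by (rule semi_preimage[OF assms(2)]) (auto simp: space_Rn shiftv_def intro: intp_var)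
  have "prodset n m A B = {x \<in> space (Rn (n+m)). restrict x {..<n} \<in> A} \<inter> {x \<in> space (Rn (n+m)). shiftv n m x \<in> B}"
    by (auto simp: prodset_def)
  then show ?thesis using semi_inter[OF 1 2] by simp
qed

lemma emeasure_prodset:
  assumes A: "A \<in> sets (Rn n)" and B: "B \<in> sets (Rn m)"
  shows "emeasure (Rn (n+m)) (prodset n m A B) = emeasure (Rn n) A * emeasure (Rn m) B"
proof -
  interpret product_sigma_finite "\<lambda>_. lborel :: real measure" by standard
  let ?I = "{..<n}" and ?J = "{n..<n+m}"
  have IJ: "?I \<inter> ?J = {}" "?I \<union> ?J = {..<n+m}" by auto
  have R: "Rn (n+m) = Pi\<^sub>M (?I \<union> ?J) (\<lambda>_. lborel)" by (simp add: Rn_def IJ)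
  have PS: "prodset n m A B \<in> sets (Rn (n+m))"
  proof -
    have "restrict x {..<n} \<in> space (Rn n)" for x by (simp add: space_Rn)
    have m1: "(\<lambda>x. restrict x {..<n}) \<in> measurable (Rn (n+m)) (Rn n)"
      unfolding Rn_def by (intro measurable_restrict measurable_component_singleton) auto
    have m2: "shiftv n m \<in> measurable (Rn (n+m)) (Rn m)"
      unfolding Rn_def shiftv_def by (intro measurable_restrict measurable_component_singleton) auto
    have "prodset n m A B = ((\<lambda>x. restrict x {..<n}) -` A \<inter> space (Rn (n+m))) \<inter> (shiftv n m -` B \<inter> space (Rn (n+m)))"
      by (auto simp: prodset_def)
    then show ?thesis using measurable_sets[OF m1 A] measurable_sets[OF m2 B] by auto
  qed
  have "emeasure (Rn (n+m)) (prodset n m A B) = (\<integral>\<^sup>+ z. indicator (prodset n m A B) z \<partial>Rn (n+m))"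
    using PS by simp
  also have "\<dots> = (\<integral>\<^sup>+ x. (\<integral>\<^sup>+ y. indicator (prodset n m A B) (merge ?I ?J (x, y)) \<partial>Pi\<^sub>M ?J (\<lambda>_. lborel)) \<partial>Pi\<^sub>M ?I (\<lambda>_. lborel))"
    unfolding R using PS R by (subst product_nn_integral_fold) auto
  also have "\<dots> = (\<integral>\<^sup>+ x. indicator A x * (\<integral>\<^sup>+ y. indicator B (shiftv n m y) \<partial>Pi\<^sub>M ?J (\<lambda>_. lborel)) \<partial>Pi\<^sub>M ?I (\<lambda>_. lborel))"
  proof (rule nn_integral_cong)
    fix x :: "nat \<Rightarrow> real" assume x: "x \<in> space (Pi\<^sub>M ?I (\<lambda>_. lborel))"
    have "(\<integral>\<^sup>+ y. indicator (prodset n m A B) (merge ?I ?J (x, y)) \<partial>Pi\<^sub>M ?J (\<lambda>_. lborel))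
        = (\<integral>\<^sup>+ y. indicator A x * indicator B (shiftv n m y) \<partial>Pi\<^sub>M ?J (\<lambda>_. lborel))"
    proof (rule nn_integral_cong)
      fix y :: "nat \<Rightarrow> real" assume y: "y \<in> space (Pi\<^sub>M ?J (\<lambda>_. lborel))"
      have 1: "merge ?I ?J (x, y) \<in> space (Rn (n+m))"
        using x y by (auto simp: space_Rn space_PiM merge_def PiE_def extensional_def)
      have 2: "restrict (merge ?I ?J (x, y)) {..<n} = x"
        using x by (auto simp: space_PiM merge_def PiE_def extensional_def restrict_def)
      have 3: "shiftv n m (merge ?I ?J (x, y)) = shiftv n m y"
        by (auto simp: shiftv_def merge_def restrict_def)
      show "indicator (prodset n m A B) (merge ?I ?J (x, y)) = (indicator A x * indicator B (shiftv n m y) :: ennreal)"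
        using 1 2 3 by (auto simp: prodset_def indicator_def)
    qed
    also have "\<dots> = indicator A x * (\<integral>\<^sup>+ y. indicator B (shiftv n m y) \<partial>Pi\<^sub>M ?J (\<lambda>_. lborel))"
    proof (rule nn_integral_cmult)
      show "(\<lambda>y. indicator B (shiftv n m y) :: ennreal) \<in> borel_measurable (Pi\<^sub>M ?J (\<lambda>_. lborel))"
        using measurable_comp[OF shiftv_meas[of n m], of "indicator B" borel] B by (simp add: comp_def)
    qed
    finally show "(\<integral>\<^sup>+ y. indicator (prodset n m A B) (merge ?I ?J (x, y)) \<partial>Pi\<^sub>M ?J (\<lambda>_. lborel))
        = indicator A x * (\<integral>\<^sup>+ y. indicator B (shiftv n m y) \<partial>Pi\<^sub>M ?J (\<lambda>_. lborel))" .
  qed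
  also have "(\<integral>\<^sup>+ y. indicator B (shiftv n m y) \<partial>Pi\<^sub>M ?J (\<lambda>_. lborel)) = emeasure (Rn m) B"
  proof -
    have "(\<integral>\<^sup>+ y. indicator B (shiftv n m y) \<partial>Pi\<^sub>M ?J (\<lambda>_. lborel)) = (\<integral>\<^sup>+ z. indicator B z \<partial>distr (Pi\<^sub>M ?J (\<lambda>_. lborel)) (Rn m) (shiftv n m))"
      using B shiftv_meas by (subst nn_integral_distr) auto
    also have "\<dots> = emeasure (Rn m) B" using B by (simp add: distr_shiftv)
    finally show ?thesis .
  qed
  also have "(\<integral>\<^sup>+ x. indicator A x * emeasure (Rn m) B \<partial>Pi\<^sub>M ?I (\<lambda>_. lborel)) = emeasure (Rn n) A * emeasure (Rn m) B"
    using A by (subst nn_integral_multc) (auto simp: Rn_def)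
  finally show ?thesis .
qed



definition pre :: "nat \<Rightarrow> ((nat \<Rightarrow> real) \<Rightarrow> (nat \<Rightarrow> real)) \<Rightarrow> (nat \<Rightarrow> real) set \<Rightarrow> (nat \<Rightarrow> real) set" where
  "pre n T S = {x \<in> space (Rn n). T x \<in> S}"

lemma pre_props:
  assumes j: "j < n" and g: "\<And>x a. g (x(j := a)) = g x" and gi: "intp n g" and S: "semi n S"
  shows "semi n (pre n (\<lambda>x. x(j := x j + g x)) S)"
    "emeasure (Rn n) (pre n (\<lambda>x. x(j := x j + g x)) S) = emeasure (Rn n) S"
proof -
  show sm: "semi n (pre n (\<lambda>x. x(j := x j + g x)) S)"
    unfolding pre_def
  proof (rule semi_preimage[OF S])
    show "x(j := x j + g x) \<in> space (Rn n)" if "x \<in> space (Rn n)" for x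
      using that j by (auto simp: space_Rn PiE_def extensional_def)
    fix i assume i: "i < n"
    show "intp n (\<lambda>x. (x(j := x j + g x)) i)"
    proof (cases "i = j")
      case True then show ?thesis using intp_add[OF intp_var[OF j] gi] by simp
    next
      case False then show ?thesis using intp_var[OF i] by simp
    qed
  qed
  show "emeasure (Rn n) (pre n (\<lambda>x. x(j := x j + g x)) S) = emeasure (Rn n) S"
    unfolding pre_def
    by (rule shear_preserve[OF j g semi_sets[OF S]]) (use sm semi_sets in \<open>auto simp: pre_def\<close>)
qed

lemma alg_var: "i < n \<Longrightarrow> alg_poly_fun n (\<lambda>x. x i)"
  using grep_alg[OF grep_scale[OF algebraic_1 intp_var]] by simp

lemma alg_nvar: "i < n \<Longrightarrow> alg_poly_fun n (\<lambda>x. - x i)"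
proof -
  assume i: "i < n"
  have "algebraic (-1::real)" by simp
  from grep_alg[OF grep_scale[OF this intp_var[OF i]]] show ?thesis by simp
qed

lemma emeasure_split2:
  assumes "A \<in> sets M" "B \<in> sets M" "A \<inter> B = {}"
  shows "emeasure M (A \<union> B) = emeasure M A + emeasure M B"
  using plus_emeasure[OF assms] by simp

lemma q12: "v - u^2 > 0 \<Longrightarrow> -(v + u^2) \<ge> (0::real) \<Longrightarrow> False" using zero_le_power2[of u] by linarith
lemma q13: assumes "v - u^2 > 0" "u - v - 1 > (0::real)" "v > 0" shows False
proof -
  have "u > 1" using assms by linarith
  then have "u * u > u * 1" by (intro mult_strict_left_mono) auto
  then show False using assms unfolding power2_eq_square by linarith
qed
lemma q15: assumes "v - u^2 > 0" "-(u + v + 1) \<ge> (0::real)" "v > 0" shows False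
proof -
  have "-u > 1" using assms by linarith
  then have "(-u) * (-u) > (-u) * 1" by (intro mult_strict_left_mono) auto
  then show False using assms unfolding power2_eq_square by linarith
qed
lemma q24: assumes "-(v + u^2) \<ge> 0" "u + v - 1 > (0::real)" "-v \<ge> 0" shows False
proof -
  have "u \<ge> 1" using assms by linarith
  then have "u * u \<ge> u * 1" by (intro mult_left_mono) auto
  then show False using assms unfolding power2_eq_square by linarith
qed
lemma q26: assumes "-(v + u^2) \<ge> 0" "-(u - v + 1) \<ge> (0::real)" "-v \<ge> 0" shows False
proof -
  have "-u \<ge> 1" using assms by linarith
  then have "(-u) * (-u) \<ge> (-u) * 1" by (intro mult_left_mono) auto
  then show False using assms unfolding power2_eq_square by linarith
qed

lemma sum_sets_ge2:
  assumes n: "2 \<le> n" and A: "admissible n A" and B: "admissible n B"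
  shows "\<exists>X. admissible n X \<and> emeasure (Rn n) X = emeasure (Rn n) A + emeasure (Rn n) B"
proof -
  have n0: "0 < n" and n1: "1 < n" using n by auto
  have sA: "semi n A" and sB: "semi n B" and fA: "emeasure (Rn n) A < \<infinity>" and fB: "emeasure (Rn n) B < \<infinity>"
    using A B by (auto simp: admissible_iff)
  define Vp where "Vp = [((\<lambda>x::nat\<Rightarrow>real. x 1), True)]"
  define Vn where "Vn = [((\<lambda>x::nat\<Rightarrow>real. - x 1), False)]"
  define Upos where "Upos = [((\<lambda>x::nat\<Rightarrow>real. x 0), True)]"
  define Uneg where "Uneg = [((\<lambda>x::nat\<Rightarrow>real. - x 0), False)]"
  have aV: "\<forall>(P, s)\<in>set cs. alg_poly_fun n P" if "cs \<in> {Vp, Vn, Upos, Uneg, Upos @ Vp, Upos @ Vn, Uneg @ Vp, Uneg @ Vn}" for cs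
    using that n0 n1 alg_var alg_nvar by (auto simp: Vp_def Vn_def Upos_def Uneg_def)
  define A1 where "A1 = A \<inter> basic_set n Vp"
  define A2 where "A2 = A \<inter> basic_set n Vn"
  define B1 where "B1 = B \<inter> basic_set n (Upos @ Vp)"
  define B2 where "B2 = B \<inter> basic_set n (Upos @ Vn)"
  define B3 where "B3 = B \<inter> basic_set n (Uneg @ Vp)"
  define B4 where "B4 = B \<inter> basic_set n (Uneg @ Vn)"
  have sA1: "semi n A1" "semi n A2" unfolding A1_def A2_def using sA aV by (auto intro!: semi_inter_basic)
  have sB1: "semi n B1" "semi n B2" "semi n B3" "semi n B4"
    unfolding B1_def B2_def B3_def B4_def using sB aV by (auto intro!: semi_inter_basic)
  have i0: "intp n (\<lambda>x. x 0)" and i1: "intp n (\<lambda>x. x 1)" using n0 n1 by (auto intro: intp_var)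
  define g1 where "g1 = (\<lambda>x::nat\<Rightarrow>real. - (x 0 ^ 2))"
  define g2 where "g2 = (\<lambda>x::nat\<Rightarrow>real. x 0 ^ 2)"
  define g3 where "g3 = (\<lambda>x::nat\<Rightarrow>real. - x 1 - 1)"
  define g4 where "g4 = (\<lambda>x::nat\<Rightarrow>real. x 1 - 1)"
  define g5 where "g5 = (\<lambda>x::nat\<Rightarrow>real. x 1 + 1)"
  define g6 where "g6 = (\<lambda>x::nat\<Rightarrow>real. - x 1 + 1)"
  have ig: "intp n g1" "intp n g2" "intp n g3" "intp n g4" "intp n g5" "intp n g6"
    unfolding g1_def g2_def g3_def g4_def g5_def g6_def
    using i0 i1 intp_one by (auto intro!: intp_neg intp_pow intp_add intp_sub)
  have gi: "g1 (x(1 := a)) = g1 x" "g2 (x(1 := a)) = g2 x" "g3 (x(0 := a)) = g3 x"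
      "g4 (x(0 := a)) = g4 x" "g5 (x(0 := a)) = g5 x" "g6 (x(0 := a)) = g6 x" for x a
    by (auto simp: g1_def g2_def g3_def g4_def g5_def g6_def)
  define X1 where "X1 = pre n (\<lambda>x. x(1 := x 1 + g1 x)) A1"
  define X2 where "X2 = pre n (\<lambda>x. x(1 := x 1 + g2 x)) A2"
  define X3 where "X3 = pre n (\<lambda>x. x(0 := x 0 + g3 x)) B1"
  define X4 where "X4 = pre n (\<lambda>x. x(0 := x 0 + g4 x)) B2"
  define X5 where "X5 = pre n (\<lambda>x. x(0 := x 0 + g5 x)) B3"
  define X6 where "X6 = pre n (\<lambda>x. x(0 := x 0 + g6 x)) B4"
  note P1 = pre_props[OF n1 gi(1) ig(1) sA1(1)] and P2 = pre_props[OF n1 gi(2) ig(2) sA1(2)]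
  note P3 = pre_props[OF n0 gi(3) ig(3) sB1(1)] and P4 = pre_props[OF n0 gi(4) ig(4) sB1(2)]
  note P5 = pre_props[OF n0 gi(5) ig(5) sB1(3)] and P6 = pre_props[OF n0 gi(6) ig(6) sB1(4)]
  have sX: "semi n X1" "semi n X2" "semi n X3" "semi n X4" "semi n X5" "semi n X6"
    unfolding X1_def X2_def X3_def X4_def X5_def X6_def using P1 P2 P3 P4 P5 P6 by auto
  have c1: "x 1 - x 0 ^ 2 > 0" if "x \<in> X1" for x
    using that by (auto simp: X1_def pre_def A1_def basic_set_def Vp_def g1_def)
  have c2: "-(x 1 + x 0 ^ 2) \<ge> 0" if "x \<in> X2" for x
    using that by (auto simp: X2_def pre_def A2_def basic_set_def Vn_def g2_def)
  have c3: "x 0 - x 1 - 1 > 0 \<and> x 1 > 0" if "x \<in> X3" for x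
    using that by (auto simp: X3_def pre_def B1_def basic_set_def Vp_def Upos_def g3_def)
  have c4: "x 0 + x 1 - 1 > 0 \<and> - x 1 \<ge> 0" if "x \<in> X4" for x
    using that by (auto simp: X4_def pre_def B2_def basic_set_def Vn_def Upos_def g4_def)
  have c5: "-(x 0 + x 1 + 1) \<ge> 0 \<and> x 1 > 0" if "x \<in> X5" for x
    using that by (auto simp: X5_def pre_def B3_def basic_set_def Vp_def Uneg_def g5_def)
  have c6: "-(x 0 - x 1 + 1) \<ge> 0 \<and> - x 1 \<ge> 0" if "x \<in> X6" for x
    using that by (auto simp: X6_def pre_def B4_def basic_set_def Vn_def Uneg_def g6_def)
  have d: "X1 \<inter> (X2 \<union> X3 \<union> X4 \<union> X5 \<union> X6) = {}" "X2 \<inter> (X3 \<union> X4 \<union> X5 \<union> X6) = {}"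
    "X3 \<inter> (X4 \<union> X5 \<union> X6) = {}" "X4 \<inter> (X5 \<union> X6) = {}" "X5 \<inter> X6 = {}"
  proof -
    show "X1 \<inter> (X2 \<union> X3 \<union> X4 \<union> X5 \<union> X6) = {}"
    proof (rule ccontr)
      assume "\<not> ?thesis"
      then obtain x where x: "x \<in> X1" "x \<in> X2 \<or> x \<in> X3 \<or> x \<in> X4 \<or> x \<in> X5 \<or> x \<in> X6" by blast
      note c = c1[OF x(1)]
      from x(2) show False
      proof (elim disjE)
        assume "x \<in> X2" then show False using c c2 q12 by blast
      next
        assume "x \<in> X3" then show False using c c3 q13 by blast
      next
        assume h: "x \<in> X4" show False using c c4[OF h] zero_le_power2[of "x 0"] by linarith
      next
        assume "x \<in> X5" then show False using c c5 q15 by blast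
      next
        assume h: "x \<in> X6" show False using c c6[OF h] zero_le_power2[of "x 0"] by linarith
      qed
    qed
    show "X2 \<inter> (X3 \<union> X4 \<union> X5 \<union> X6) = {}"
    proof (rule ccontr)
      assume "\<not> ?thesis"
      then obtain x where x: "x \<in> X2" "x \<in> X3 \<or> x \<in> X4 \<or> x \<in> X5 \<or> x \<in> X6" by blast
      note c = c2[OF x(1)]
      from x(2) show False
      proof (elim disjE)
        assume h: "x \<in> X3" show False using c c3[OF h] zero_le_power2[of "x 0"] by linarith
      next
        assume "x \<in> X4" then show False using c c4 q24 by blast
      next
        assume h: "x \<in> X5" show False using c c5[OF h] zero_le_power2[of "x 0"] by linarith
      next
        assume "x \<in> X6" then show False using c c6 q26 by blast
      qed
    qed
    show "X3 \<inter> (X4 \<union> X5 \<union> X6) = {}" using c3 c4 c5 c6 by fastforce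
    show "X4 \<inter> (X5 \<union> X6) = {}" using c4 c5 c6 by fastforce
    show "X5 \<inter> X6 = {}" using c5 c6 by fastforce
  qed
  define X where "X = X1 \<union> (X2 \<union> (X3 \<union> (X4 \<union> (X5 \<union> X6))))"
  have ms: "X1 \<in> sets (Rn n)" "X2 \<in> sets (Rn n)" "X3 \<in> sets (Rn n)" "X4 \<in> sets (Rn n)" "X5 \<in> sets (Rn n)" "X6 \<in> sets (Rn n)"
    using sX semi_sets by auto
  have semX: "semi n X" unfolding X_def using sX by (intro semi_union)
  have "emeasure (Rn n) X = emeasure (Rn n) X1 + (emeasure (Rn n) X2 + (emeasure (Rn n) X3 + (emeasure (Rn n) X4 + (emeasure (Rn n) X5 + emeasure (Rn n) X6))))"
    unfolding X_def using ms d
    by (subst emeasure_split2, (auto)[3])+ (rule refl)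
  also have "\<dots> = emeasure (Rn n) A1 + (emeasure (Rn n) A2 + (emeasure (Rn n) B1 + (emeasure (Rn n) B2 + (emeasure (Rn n) B3 + emeasure (Rn n) B4))))"
    unfolding X1_def X2_def X3_def X4_def X5_def X6_def using P1 P2 P3 P4 P5 P6 by simp
  finally have e1: "emeasure (Rn n) X = (emeasure (Rn n) A1 + emeasure (Rn n) A2) + (emeasure (Rn n) B1 + (emeasure (Rn n) B2 + (emeasure (Rn n) B3 + emeasure (Rn n) B4)))"
    by (simp add: add.assoc)
  have hA: "emeasure (Rn n) A1 + emeasure (Rn n) A2 = emeasure (Rn n) A"
  proof -
    have "A = A1 \<union> A2" using semi_space[OF sA]
      by (auto simp: A1_def A2_def basic_set_alt Vp_def Vn_def)
    moreover have "A1 \<inter> A2 = {}" by (auto simp: A1_def A2_def basic_set_alt Vp_def Vn_def)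
    ultimately show ?thesis using emeasure_split2 sA1 semi_sets by metis
  qed
  have hB: "emeasure (Rn n) B1 + (emeasure (Rn n) B2 + (emeasure (Rn n) B3 + emeasure (Rn n) B4)) = emeasure (Rn n) B"
  proof -
    have "B = B1 \<union> (B2 \<union> (B3 \<union> B4))" using semi_space[OF sB]
      by (auto simp: B1_def B2_def B3_def B4_def basic_set_alt Vp_def Vn_def Upos_def Uneg_def)
    moreover have "B1 \<inter> (B2 \<union> (B3 \<union> B4)) = {}" "B2 \<inter> (B3 \<union> B4) = {}" "B3 \<inter> B4 = {}"
      by (auto simp: B1_def B2_def B3_def B4_def basic_set_alt Vp_def Vn_def Upos_def Uneg_def)
    moreover have "B1 \<in> sets (Rn n)" "B2 \<in> sets (Rn n)" "B3 \<in> sets (Rn n)" "B4 \<in> sets (Rn n)"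
      using sB1 semi_sets by auto
    ultimately show ?thesis by (simp add: emeasure_split2)
  qed
  have eq: "emeasure (Rn n) X = emeasure (Rn n) A + emeasure (Rn n) B"
    using e1 hA hB by simp
  have "emeasure (Rn n) X < \<infinity>" using eq fA fB by (simp add: ennreal_add_less_top)
  then show ?thesis using semX eq by (auto simp: admissible_iff)
qed



lemma lborel_Ici: "emeasure lborel {N::real..} = \<infinity>"
proof (rule ccontr)
  assume H: "emeasure lborel {N::real..} \<noteq> \<infinity>"
  obtain r where r: "0 \<le> r" "emeasure lborel {N..} = ennreal r"
    using H by (cases "emeasure lborel {N::real..}" rule: ennreal_cases) auto
  have "emeasure lborel {N..N + r + 1} \<le> emeasure lborel {N..}" by (rule emeasure_mono) auto
  then have "ennreal (r + 1) \<le> ennreal r" using r by simp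
  then show False using r by (simp add: ennreal_le_iff)
qed

lemma alg1_poly: assumes "alg_poly_fun 1 P" shows "\<exists>q :: real poly. \<forall>x. P x = poly q (x 0)"
proof -
  from assms obtain S c where 1: "\<forall>x. P x = (\<Sum>a\<in>S. c a * (\<Prod>i<1. x i ^ a i))"
    unfolding alg_poly_fun_def by blast
  show ?thesis
    by (rule exI[of _ "\<Sum>a\<in>S. monom (c a) (a 0)"]) (simp add: 1 poly_sum poly_monom)
qed

definition ec :: "(real \<Rightarrow> bool) \<Rightarrow> bool" where
  "ec Q \<longleftrightarrow> (\<exists>N. \<forall>y\<ge>N. Q y = Q N)"
definition ecd :: "(real \<Rightarrow> bool) \<Rightarrow> bool" where
  "ecd Q \<longleftrightarrow> (\<exists>N. \<forall>y\<le>N. Q y = Q N)"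

lemma ec_conj: "ec P \<Longrightarrow> ec Q \<Longrightarrow> ec (\<lambda>y. P y \<and> Q y)"
  unfolding ec_def
proof (elim exE)
  fix N1 N2 assume 1: "\<forall>y\<ge>N1. P y = P N1" and 2: "\<forall>y\<ge>N2. Q y = Q N2"
  show "\<exists>N. \<forall>y\<ge>N. (P y \<and> Q y) = (P N \<and> Q N)"
  proof (intro exI[of _ "max N1 N2"] allI impI)
    fix y assume "y \<ge> max N1 N2"
    then have "P y = P N1" "P (max N1 N2) = P N1" "Q y = Q N2" "Q (max N1 N2) = Q N2"
      using 1[rule_format, of y] 1[rule_format, of "max N1 N2"] 2[rule_format, of y] 2[rule_format, of "max N1 N2"] by auto
    then show "(P y \<and> Q y) = (P (max N1 N2) \<and> Q (max N1 N2))" by simp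
  qed
qed

lemma ecd_conj: "ecd P \<Longrightarrow> ecd Q \<Longrightarrow> ecd (\<lambda>y. P y \<and> Q y)"
  unfolding ecd_def
proof (elim exE)
  fix N1 N2 assume 1: "\<forall>y\<le>N1. P y = P N1" and 2: "\<forall>y\<le>N2. Q y = Q N2"
  show "\<exists>N. \<forall>y\<le>N. (P y \<and> Q y) = (P N \<and> Q N)"
  proof (intro exI[of _ "min N1 N2"] allI impI)
    fix y assume "y \<le> min N1 N2"
    then have "P y = P N1" "P (min N1 N2) = P N1" "Q y = Q N2" "Q (min N1 N2) = Q N2"
      using 1[rule_format, of y] 1[rule_format, of "min N1 N2"] 2[rule_format, of y] 2[rule_format, of "min N1 N2"] by auto
    then show "(P y \<and> Q y) = (P (min N1 N2) \<and> Q (min N1 N2))" by simp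
  qed
qed

lemma poly_sgn_ev: fixes q :: "real poly"
  shows "\<exists>N. \<forall>y\<ge>N. sgn (poly q y) = sgn (poly q N)"
proof (cases "q = 0")
  case True then show ?thesis by simp
next
  case False
  define R where "R = {x. poly q x = 0}"
  have fR: "finite R" using poly_roots_finite[OF False] by (simp add: R_def)
  define N where "N = Max (insert 0 R) + 1"
  have nz: "poly q y \<noteq> 0" if "y \<ge> N" for y
  proof
    assume "poly q y = 0"
    then have "y \<in> insert 0 R" by (simp add: R_def)
    then have "y \<le> Max (insert 0 R)" using fR by simp
    then show False using that by (simp add: N_def)
  qed
  have "sgn (poly q y) = sgn (poly q N)" if y: "y \<ge> N" for y
  proof (rule ccontr)
    assume ne: "sgn (poly q y) \<noteq> sgn (poly q N)"
    then have yN: "N < y" using y by (cases "N = y") auto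
    have a: "poly q y \<noteq> 0" "poly q N \<noteq> 0" using nz y by auto
    obtain z where z: "N < z" "z < y" "poly q z = 0"
    proof (cases "poly q N > 0")
      case True
      then have "poly q y < 0" using ne a by (auto simp: sgn_if split: if_splits)
      then show ?thesis using poly_IVT_neg[OF yN True] that by blast
    next
      case False
      then have "poly q N < 0" "poly q y > 0" using ne a by (auto simp: sgn_if split: if_splits)
      then show ?thesis using poly_IVT_pos[OF yN] that by blast
    qed
    then show False using nz[of z] by simp
  qed
  then show ?thesis by blast
qed

lemma poly_sgn_evd: fixes q :: "real poly"
  shows "\<exists>N. \<forall>y\<le>N. sgn (poly q y) = sgn (poly q N)"
proof (cases "q = 0")
  case True then show ?thesis by simp
next
  case False
  define R where "R = {x. poly q x = 0}"
  have fR: "finite R" using poly_roots_finite[OF False] by (simp add: R_def)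
  define N where "N = Min (insert 0 R) - 1"
  have nz: "poly q y \<noteq> 0" if "y \<le> N" for y
  proof
    assume "poly q y = 0"
    then have "y \<in> insert 0 R" by (simp add: R_def)
    then have "y \<ge> Min (insert 0 R)" using fR by simp
    then show False using that by (simp add: N_def)
  qed
  have "sgn (poly q y) = sgn (poly q N)" if y: "y \<le> N" for y
  proof (rule ccontr)
    assume ne: "sgn (poly q y) \<noteq> sgn (poly q N)"
    then have yN: "y < N" using y by (cases "N = y") auto
    have a: "poly q y \<noteq> 0" "poly q N \<noteq> 0" using nz y by auto
    obtain z where z: "y < z" "z < N" "poly q z = 0"
    proof (cases "poly q y > 0")
      case True
      then have "poly q N < 0" using ne a by (auto simp: sgn_if split: if_splits)
      then show ?thesis using poly_IVT_neg[OF yN True] that by blast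
    next
      case False
      then have "poly q y < 0" "poly q N > 0" using ne a by (auto simp: sgn_if split: if_splits)
      then show ?thesis using poly_IVT_pos[OF yN] that by blast
    qed
    then show False using nz[of z] z by simp
  qed
  then show ?thesis by blast
qed

definition pt :: "real \<Rightarrow> (nat \<Rightarrow> real)" where
  "pt y = (\<lambda>i\<in>{..<1}. y)"

lemma pt_space: "pt y \<in> space (Rn 1)" by (simp add: pt_def space_Rn)

lemma pt_space': "pt y \<in> space (Rn (Suc 0))" using pt_space by simp

lemma space1_pt: "x \<in> space (Rn 1) \<Longrightarrow> x = pt (x 0)"
  by (auto simp: pt_def space_Rn PiE_def extensional_def restrict_def)

lemma cond_ec:
  assumes "alg_poly_fun 1 P"
  shows "ec (\<lambda>y. if s then P (pt y) > 0 else P (pt y) \<ge> 0)"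
    "ecd (\<lambda>y. if s then P (pt y) > 0 else P (pt y) \<ge> 0)"
proof -
  obtain q where q: "\<forall>x. P x = poly q (x 0)" using alg1_poly[OF assms] by blast
  have Pq: "P (pt y) = poly q y" for y using q by (simp add: pt_def)
  have key: "sgn a = sgn b \<Longrightarrow> ((if s then a > 0 else a \<ge> 0) \<longleftrightarrow> (if s then b > 0 else b \<ge> 0))" for a b :: real
    by (auto simp: sgn_if split: if_splits)
  obtain N where N: "\<forall>y\<ge>N. sgn (poly q y) = sgn (poly q N)" using poly_sgn_ev by blast
  show "ec (\<lambda>y. if s then P (pt y) > 0 else P (pt y) \<ge> 0)"
    unfolding ec_def Pq using N key by blast
  obtain N' where N': "\<forall>y\<le>N'. sgn (poly q y) = sgn (poly q N')" using poly_sgn_evd by blast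
  show "ecd (\<lambda>y. if s then P (pt y) > 0 else P (pt y) \<ge> 0)"
    unfolding ecd_def Pq using N' key by blast
qed

lemma basic_ec:
  assumes "\<forall>(P, s) \<in> set cs. alg_poly_fun 1 P"
  shows "ec (\<lambda>y. pt y \<in> basic_set 1 cs) \<and> ecd (\<lambda>y. pt y \<in> basic_set 1 cs)"
  using assms
proof (induction cs)
  case Nil
  then show ?case by (simp add: ec_def ecd_def basic_set_alt pt_space')
next
  case (Cons c cs)
  obtain P s where c: "c = (P, s)" by force
  have e: "(\<lambda>y. pt y \<in> basic_set 1 (c # cs)) = (\<lambda>y. (if s then P (pt y) > 0 else P (pt y) \<ge> 0) \<and> pt y \<in> basic_set 1 cs)"
    using c by (auto simp: basic_set_alt pt_space pt_space')
  have "alg_poly_fun 1 P" using Cons.prems c by auto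
  then show ?case unfolding e using Cons cond_ec ec_conj ecd_conj by auto
qed

lemma ray_inf: "emeasure (Rn 1) {x \<in> space (Rn 1). x 0 \<ge> N} = \<infinity>"
proof -
  interpret F: finite_product_sigma_finite "\<lambda>_. lborel :: real measure" "{..<1::nat}" by standard simp
  have "{x \<in> space (Rn 1). x 0 \<ge> N} = PiE {..<1} (\<lambda>_. {N..})"
    by (auto simp: space_Rn PiE_def)
  then show ?thesis by (simp add: Rn_def F.emeasure_PiM lborel_Ici)
qed

lemma ray_inf': "emeasure (Rn 1) {x \<in> space (Rn 1). x 0 \<le> N} = \<infinity>"
proof -
  interpret F: finite_product_sigma_finite "\<lambda>_. lborel :: real measure" "{..<1::nat}" by standard simp
  have "{x \<in> space (Rn 1). x 0 \<le> N} = PiE {..<1} (\<lambda>_. {..N})"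
    by (auto simp: space_Rn PiE_def)
  moreover have "emeasure lborel {..N} = \<infinity>"
  proof -
    have "emeasure lborel {..N} = emeasure (distr lborel borel uminus) {..N}" by (simp add: lborel_distr_uminus)
    also have "\<dots> = emeasure lborel (uminus -` {..N})" by (subst emeasure_distr) auto
    also have "uminus -` {..N} = {-N..}" by auto
    finally show ?thesis by (simp add: lborel_Ici)
  qed
  ultimately show ?thesis by (simp add: Rn_def F.emeasure_PiM)
qed

lemma admissible1_bounded:
  assumes "admissible 1 A" shows "\<exists>N. \<forall>x\<in>A. \<bar>x 0\<bar> \<le> N"
proof -
  from assms obtain L where L: "\<forall>cs\<in>set L. \<forall>(P, s)\<in>set cs. alg_poly_fun 1 P" "A = \<Union> (basic_set 1 ` set L)"
    and fin: "emeasure (Rn 1) A < \<infinity>" and sA: "semi 1 A" unfolding admissible_iff semi_def by blast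
  have "\<exists>N. \<forall>x\<in>basic_set 1 cs. \<bar>x 0\<bar> \<le> N" if cs: "cs \<in> set L" for cs
  proof -
    have sub: "basic_set 1 cs \<subseteq> A" using cs L by auto
    have fin': "emeasure (Rn 1) S < \<infinity>" if "S \<subseteq> basic_set 1 cs" "S \<in> sets (Rn 1)" for S
      using emeasure_mono[of S A "Rn 1"] that sub fin semi_sets[OF sA] by (meson order.trans le_less_trans)
    have E: "ec (\<lambda>y. pt y \<in> basic_set 1 cs)" "ecd (\<lambda>y. pt y \<in> basic_set 1 cs)"
      using basic_ec L cs by auto
    obtain N1 where N1: "\<forall>y\<ge>N1. (pt y \<in> basic_set 1 cs) = (pt N1 \<in> basic_set 1 cs)"
      using E(1) unfolding ec_def by blast
    obtain N2 where N2: "\<forall>y\<le>N2. (pt y \<in> basic_set 1 cs) = (pt N2 \<in> basic_set 1 cs)"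
      using E(2) unfolding ecd_def by blast
    have n1: "pt N1 \<notin> basic_set 1 cs"
    proof
      assume h: "pt N1 \<in> basic_set 1 cs"
      have "{x \<in> space (Rn 1). x 0 \<ge> N1} \<subseteq> basic_set 1 cs"
      proof
        fix x assume "x \<in> {x \<in> space (Rn 1). x 0 \<ge> N1}"
        then have x: "x \<in> space (Rn 1)" "x 0 \<ge> N1" by auto
        have "pt (x 0) \<in> basic_set 1 cs" using N1[rule_format, OF x(2)] h by simp
        then show "x \<in> basic_set 1 cs" using space1_pt[OF x(1)] by simp
      qed
      then have "emeasure (Rn 1) {x \<in> space (Rn 1). x 0 \<ge> N1} < \<infinity>"
        by (intro fin') (auto simp: Rn_def)
      then show False using ray_inf by simp
    qed
    have n2: "pt N2 \<notin> basic_set 1 cs"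
    proof
      assume h: "pt N2 \<in> basic_set 1 cs"
      have "{x \<in> space (Rn 1). x 0 \<le> N2} \<subseteq> basic_set 1 cs"
      proof
        fix x assume "x \<in> {x \<in> space (Rn 1). x 0 \<le> N2}"
        then have x: "x \<in> space (Rn 1)" "x 0 \<le> N2" by auto
        have "pt (x 0) \<in> basic_set 1 cs" using N2[rule_format, OF x(2)] h by simp
        then show "x \<in> basic_set 1 cs" using space1_pt[OF x(1)] by simp
      qed
      then have "emeasure (Rn 1) {x \<in> space (Rn 1). x 0 \<le> N2} < \<infinity>"
        by (intro fin') (auto simp: Rn_def)
      then show False using ray_inf' by simp
    qed
    show ?thesis
    proof (intro exI ballI)
      fix x assume x: "x \<in> basic_set 1 cs"
      then have xs: "x \<in> space (Rn 1)" by (simp add: basic_set_alt)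
      have "\<not> x 0 \<ge> N1"
      proof
        assume "x 0 \<ge> N1"
        then have "pt (x 0) \<notin> basic_set 1 cs" using N1[rule_format, of "x 0"] n1 by simp
        then show False using x space1_pt[OF xs] by simp
      qed
      moreover have "\<not> x 0 \<le> N2"
      proof
        assume "x 0 \<le> N2"
        then have "pt (x 0) \<notin> basic_set 1 cs" using N2[rule_format, of "x 0"] n2 by simp
        then show False using x space1_pt[OF xs] by simp
      qed
      ultimately show "\<bar>x 0\<bar> \<le> max \<bar>N1\<bar> \<bar>N2\<bar>" by linarith
    qed
  qed
  then obtain Nf where Nf: "\<forall>cs\<in>set L. \<forall>x\<in>basic_set 1 cs. \<bar>x 0\<bar> \<le> Nf cs" by metis
  show ?thesis
  proof (intro exI ballI)
    fix x assume "x \<in> A"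
    then obtain cs where cs: "cs \<in> set L" "x \<in> basic_set 1 cs" using L by auto
    then have "\<bar>x 0\<bar> \<le> Nf cs" using Nf by auto
    also have "\<dots> \<le> Max (Nf ` set L)" using cs by simp
    finally show "\<bar>x 0\<bar> \<le> Max (Nf ` set L)" .
  qed
qed

lemma sum_sets_1:
  assumes A: "admissible 1 A" and B: "admissible 1 B"
  shows "\<exists>X. admissible 1 X \<and> emeasure (Rn 1) X = emeasure (Rn 1) A + emeasure (Rn 1) B"
proof -
  have sA: "semi 1 A" and sB: "semi 1 B" and fA: "emeasure (Rn 1) A < \<infinity>" and fB: "emeasure (Rn 1) B < \<infinity>"
    using A B by (auto simp: admissible_iff)
  obtain NA where NA: "\<forall>x\<in>A. \<bar>x 0\<bar> \<le> NA" using admissible1_bounded[OF A] by blast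
  obtain NB where NB: "\<forall>x\<in>B. \<bar>x 0\<bar> \<le> NB" using admissible1_bounded[OF B] by blast
  define t :: nat where "t = nat \<lceil>NA + NB\<rceil> + 1"
  have tb: "real t > NA + NB" unfolding t_def by linarith
  define g where "g = (\<lambda>x::nat\<Rightarrow>real. - real t)"
  have ig: "intp 1 g" unfolding g_def by (intro intp_neg intp_of_nat)
  have gi: "g (x(0 := a)) = g x" for x a by (simp add: g_def)
  define Y where "Y = pre 1 (\<lambda>x. x(0 := x 0 + g x)) B"
  note PY = pre_props[of 0 1, OF _ gi ig sB]
  have sY: "semi 1 Y" and mY: "emeasure (Rn 1) Y = emeasure (Rn 1) B" using PY by (auto simp: Y_def)
  have d: "A \<inter> Y = {}"
  proof (rule ccontr)
    assume "A \<inter> Y \<noteq> {}"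
    then obtain x where x: "x \<in> A" "x \<in> Y" by blast
    have "\<bar>x 0 - real t\<bar> \<le> NB" using x(2) NB by (auto simp: Y_def pre_def g_def)
    moreover have "\<bar>x 0\<bar> \<le> NA" using x(1) NA by auto
    ultimately show False using tb by linarith
  qed
  have eq: "emeasure (Rn 1) (A \<union> Y) = emeasure (Rn 1) A + emeasure (Rn 1) B"
    using emeasure_split2[OF semi_sets[OF sA] semi_sets[OF sY] d] mY by simp
  have "emeasure (Rn 1) (A \<union> Y) < \<infinity>" using eq fA fB by (simp add: ennreal_add_less_top)
  then show ?thesis using semi_union[OF sA sY] eq by (auto simp: admissible_iff)
qed



lemma sum_sets:
  assumes n: "1 \<le> n" and A: "admissible n A" and B: "admissible n B"
  shows "\<exists>X. admissible n X \<and> measure (Rn n) X = measure (Rn n) A + measure (Rn n) B"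
proof -
  obtain X where X: "admissible n X" "emeasure (Rn n) X = emeasure (Rn n) A + emeasure (Rn n) B"
  proof (cases "n = 1")
    case True then show ?thesis using sum_sets_1 A B that by blast
  next
    case False then show ?thesis using sum_sets_ge2[of n A B] n A B that by fastforce
  qed
  have fA: "emeasure (Rn n) A < \<infinity>" and fB: "emeasure (Rn n) B < \<infinity>"
    using A B by (auto simp: admissible_iff)
  have "measure (Rn n) X = enn2real (emeasure (Rn n) A + emeasure (Rn n) B)"
    by (simp add: measure_def X(2))
  also have "\<dots> = measure (Rn n) A + measure (Rn n) B"
    using fA fB by (simp add: measure_def enn2real_plus)
  finally show ?thesis using X(1) by blast
qed

lemma admissible_empty: "admissible n {}"
  by (simp add: admissible_iff semi_empty)

lemma period_zero: "period_in_dim n 0"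
  unfolding period_in_dim_def using admissible_empty by force

lemma period_neg: "period_in_dim n a \<Longrightarrow> period_in_dim n (- a)"
  unfolding period_in_dim_def by force

lemma period_add:
  assumes n: "1 \<le> n" and a: "period_in_dim n a" and b: "period_in_dim n b"
  shows "period_in_dim n (a + b)"
proof -
  obtain A1 A2 where A: "admissible n A1" "admissible n A2" "a = measure (Rn n) A1 - measure (Rn n) A2"
    using a unfolding period_in_dim_def by blast
  obtain B1 B2 where B: "admissible n B1" "admissible n B2" "b = measure (Rn n) B1 - measure (Rn n) B2"
    using b unfolding period_in_dim_def by blast
  obtain X1 where X1: "admissible n X1" "measure (Rn n) X1 = measure (Rn n) A1 + measure (Rn n) B1"
    using sum_sets[OF n A(1) B(1)] by blast
  obtain X2 where X2: "admissible n X2" "measure (Rn n) X2 = measure (Rn n) A2 + measure (Rn n) B2"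
    using sum_sets[OF n A(2) B(2)] by blast
  show ?thesis unfolding period_in_dim_def
    by (rule exI[of _ X1], rule exI[of _ X2]) (use A B X1 X2 in auto)
qed

lemma period_sub: "1 \<le> n \<Longrightarrow> period_in_dim n a \<Longrightarrow> period_in_dim n b \<Longrightarrow> period_in_dim n (a - b)"
  using period_add[of n a "-b"] period_neg by simp

lemma prod_sets:
  assumes A: "admissible n A" and B: "admissible m B"
  shows "admissible (n+m) (prodset n m A B) \<and> measure (Rn (n+m)) (prodset n m A B) = measure (Rn n) A * measure (Rn m) B"
proof -
  have sA: "semi n A" and sB: "semi m B" and fA: "emeasure (Rn n) A < \<infinity>" and fB: "emeasure (Rn m) B < \<infinity>"
    using A B by (auto simp: admissible_iff)
  have e: "emeasure (Rn (n+m)) (prodset n m A B) = emeasure (Rn n) A * emeasure (Rn m) B"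
    using emeasure_prodset[OF semi_sets[OF sA] semi_sets[OF sB]] .
  have "emeasure (Rn n) A * emeasure (Rn m) B < \<infinity>" using fA fB
    by (simp add: ennreal_mult_less_top)
  then have "admissible (n+m) (prodset n m A B)" using e semi_prodset[OF sA sB] by (simp add: admissible_iff)
  moreover have "measure (Rn (n+m)) (prodset n m A B) = measure (Rn n) A * measure (Rn m) B"
    by (simp add: measure_def e enn2real_mult)
  ultimately show ?thesis by blast
qed

lemma period_prod_basic:
  assumes A: "admissible n A" and B: "admissible m B"
  shows "period_in_dim (n+m) (measure (Rn n) A * measure (Rn m) B)"
  unfolding period_in_dim_def
  by (rule exI[of _ "prodset n m A B"], rule exI[of _ "{}"]) (use prod_sets[OF A B] admissible_empty in auto)

lemma period_mult:
  assumes n: "1 \<le> n" and a: "period_in_dim n a" and b: "period_in_dim m b"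
  shows "period_in_dim (n+m) (a * b)"
proof -
  obtain A1 A2 where A: "admissible n A1" "admissible n A2" "a = measure (Rn n) A1 - measure (Rn n) A2"
    using a unfolding period_in_dim_def by blast
  obtain B1 B2 where B: "admissible m B1" "admissible m B2" "b = measure (Rn m) B1 - measure (Rn m) B2"
    using b unfolding period_in_dim_def by blast
  have nm: "1 \<le> n + m" using n by simp
  have "a * b = (measure (Rn n) A1 * measure (Rn m) B1 - measure (Rn n) A1 * measure (Rn m) B2)
      - (measure (Rn n) A2 * measure (Rn m) B1 - measure (Rn n) A2 * measure (Rn m) B2)"
    unfolding A(3) B(3) by (simp add: algebra_simps)
  also have "period_in_dim (n+m) \<dots>"
    using A B by (intro period_sub[OF nm] period_prod_basic)
  finally show ?thesis .
qed

lemma unit_interval: "\<exists>I. admissible 1 I \<and> measure (Rn 1) I = 1"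
proof -
  define cs where "cs = [((\<lambda>x::nat\<Rightarrow>real. x 0), False), ((\<lambda>x::nat\<Rightarrow>real. 1 - x 0), False)]"
  have a1: "alg_poly_fun 1 (\<lambda>x. 1 - x 0)"
    using grep_alg[OF grep_scale[OF algebraic_1 intp_sub[OF intp_one intp_var[of 0 1]]]] by simp
  have s: "semi 1 (basic_set 1 cs)"
    unfolding semi_def
    by (rule exI[of _ "[cs]"]) (use a1 alg_var[of 0 1] in \<open>auto simp: cs_def\<close>)
  interpret F: finite_product_sigma_finite "\<lambda>_. lborel :: real measure" "{..<1::nat}" by standard simp
  have eq: "basic_set 1 cs = PiE {..<1} (\<lambda>_. {0..1})"
    by (auto simp: basic_set_def cs_def PiE_def)
  have e: "emeasure (Rn 1) (basic_set 1 cs) = 1"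
    unfolding eq by (simp add: Rn_def F.emeasure_PiM)
  show ?thesis
    by (rule exI[of _ "basic_set 1 cs"]) (use e s in \<open>auto simp: admissible_iff measure_def\<close>)
qed

lemma period_one: "period_in_dim 1 1"
proof -
  obtain I where I: "admissible 1 I" "measure (Rn 1) I = 1" using unit_interval by blast
  show ?thesis unfolding period_in_dim_def
    by (rule exI[of _ I], rule exI[of _ "{}"]) (use I admissible_empty in auto)
qed

lemma period_mono: "1 \<le> n \<Longrightarrow> n \<le> m \<Longrightarrow> period_in_dim n a \<Longrightarrow> period_in_dim m a"
proof (induction m)
  case 0 then show ?case by simp
next
  case (Suc k)
  show ?case
  proof (cases "n = Suc k")
    case True then show ?thesis using Suc by simp
  next
    case False
    then have "period_in_dim k a" using Suc by auto
    then have "period_in_dim (k + 1) (a * 1)"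
      using Suc False by (intro period_mult period_one) auto
    then show ?thesis by simp
  qed
qed

lemma deg_le: "1 \<le> k \<Longrightarrow> period_in_dim k a \<Longrightarrow> real_period_deg a \<le> enat k"
proof -
  assume k: "1 \<le> k" and p: "period_in_dim k a"
  then have rp: "real_period a" by (auto simp: real_period_def)
  show ?thesis
  proof (cases "a = 0")
    case True then show ?thesis by (simp add: real_period_deg_def)
  next
    case False
    have "(LEAST n. n \<ge> 1 \<and> period_in_dim n a) \<le> k" using k p by (intro Least_le) auto
    then show ?thesis using False rp by (simp add: real_period_deg_def)
  qed
qed

lemma deg_spec:
  assumes "real_period a" "a \<noteq> 0"
  shows "\<exists>d. 1 \<le> d \<and> real_period_deg a = enat d \<and> period_in_dim d a"
proof -
  have ex: "\<exists>n. n \<ge> 1 \<and> period_in_dim n a" using assms(1) by (auto simp: real_period_def)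
  have "(LEAST n. n \<ge> 1 \<and> period_in_dim n a) \<ge> 1 \<and> period_in_dim (LEAST n. n \<ge> 1 \<and> period_in_dim n a) a"
    by (rule LeastI_ex[OF ex])
  then show ?thesis using assms by (auto simp: real_period_deg_def)
qed

lemma in_dim_of_deg:
  assumes "real_period a" "real_period_deg a \<le> enat k" "1 \<le> k"
  shows "period_in_dim k a"
proof (cases "a = 0")
  case True then show ?thesis by (simp add: period_zero)
next
  case False
  obtain d where d: "1 \<le> d" "real_period_deg a = enat d" "period_in_dim d a" using deg_spec[OF assms(1) False] by blast
  then show ?thesis using assms period_mono[of d k a] by auto
qed

lemma deg0: "real_period a \<Longrightarrow> real_period_deg a = 0 \<Longrightarrow> a = 0"
  using deg_spec[of a] by (auto simp: zero_enat_def)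

lemma deg_fin: "real_period a \<Longrightarrow> \<exists>d. real_period_deg a = enat d"
  using deg_spec[of a] by (cases "a = 0") (auto simp: real_period_deg_def zero_enat_def)

lemma complex_deg:
  assumes k: "1 \<le> k" and "period_in_dim k (Re z)" "period_in_dim k (Im z)"
  shows "period z \<and> period_deg z \<le> enat k"
proof -
  have "period z" using assms by (auto simp: period_def real_period_def)
  moreover have "period_deg z \<le> enat k"
    using assms \<open>period z\<close> deg_le by (simp add: period_deg_def)
  ultimately show ?thesis by blast
qed

lemma period_deg_zero: "period_deg 0 = 0"
proof -
  have "real_period 0" using period_zero[of 1] by (auto simp: real_period_def)
  then show ?thesis by (simp add: period_deg_def period_def real_period_deg_def)
qed

theorem proposition3p2:
  fixes p1 p2 :: complex
  assumes "period p1" and "period p2"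
  shows "period_deg (p1 * p2) \<le> period_deg p1 + period_deg p2
    \<and> period_deg (p1 + p2) \<le> max (period_deg p1) (period_deg p2)"
proof -
  have r: "real_period (Re p1)" "real_period (Im p1)" "real_period (Re p2)" "real_period (Im p2)"
    using assms by (auto simp: period_def)
  obtain a1 b1 a2 b2 where ab: "real_period_deg (Re p1) = enat a1" "real_period_deg (Im p1) = enat b1"
    "real_period_deg (Re p2) = enat a2" "real_period_deg (Im p2) = enat b2"
    using deg_fin r by metis
  define d1 where "d1 = max a1 b1"
  define d2 where "d2 = max a2 b2"
  have D1: "period_deg p1 = enat d1" using assms ab by (simp add: period_deg_def d1_def)
  have D2: "period_deg p2 = enat d2" using assms ab by (simp add: period_deg_def d2_def)
  have inD1: "period_in_dim k (Re p1)" "period_in_dim k (Im p1)" if "d1 \<le> k" "1 \<le> k" for k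
    using that ab r by (auto intro!: in_dim_of_deg simp: d1_def)
  have inD2: "period_in_dim k (Re p2)" "period_in_dim k (Im p2)" if "d2 \<le> k" "1 \<le> k" for k
    using that ab r by (auto intro!: in_dim_of_deg simp: d2_def)
  have z1: "p1 = 0" if "d1 = 0"
  proof -
    have "Re p1 = 0" "Im p1 = 0" using that ab r deg0 by (auto simp: d1_def zero_enat_def)
    then show ?thesis by (simp add: complex_eq_iff)
  qed
  have z2: "p2 = 0" if "d2 = 0"
  proof -
    have "Re p2 = 0" "Im p2 = 0" using that ab r deg0 by (auto simp: d2_def zero_enat_def)
    then show ?thesis by (simp add: complex_eq_iff)
  qed
  have mult: "period_deg (p1 * p2) \<le> period_deg p1 + period_deg p2"
  proof (cases "d1 = 0 \<or> d2 = 0")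
    case True
    then have "p1 * p2 = 0" using z1 z2 by auto
    then have "period_deg (p1 * p2) = 0" using period_deg_zero by metis
    then show ?thesis by simp
  next
    case False
    then have k1: "1 \<le> d1" "1 \<le> d2" by auto
    have "period_in_dim (d1 + d2) (Re p1 * Re p2 - Im p1 * Im p2)"
      using k1 by (intro period_sub period_mult inD1 inD2) auto
    moreover have "period_in_dim (d1 + d2) (Re p1 * Im p2 + Im p1 * Re p2)"
      using k1 by (intro period_add period_mult inD1 inD2) auto
    ultimately have "period_deg (p1 * p2) \<le> enat (d1 + d2)"
      using complex_deg[of "d1 + d2" "p1 * p2"] k1 by simp
    then show ?thesis by (simp add: D1 D2)
  qed
  have add: "period_deg (p1 + p2) \<le> max (period_deg p1) (period_deg p2)"
  proof (cases "d1 = 0 \<and> d2 = 0")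
    case True
    then have "p1 + p2 = 0" using z1 z2 by auto
    then have "period_deg (p1 + p2) = 0" using period_deg_zero by metis
    then show ?thesis by simp
  next
    case False
    define M where "M = max d1 d2"
    have k: "1 \<le> M" using False by (auto simp: M_def)
    have "period_in_dim M (Re p1 + Re p2)" "period_in_dim M (Im p1 + Im p2)"
      using k by (auto intro!: period_add inD1 inD2 simp: M_def)
    then have "period_deg (p1 + p2) \<le> enat M"
      using complex_deg[of M "p1 + p2"] k by simp
    then show ?thesis by (simp add: D1 D2 M_def)
  qed
  show ?thesis using mult add by blast
qed

end
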